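(* Let $S^{\max}$, $L$ and $\mathcal{I}$ be as in the context. For all $\sigma,\sigma'\in\mathbb{T}$ with $\sigma\preceq\sigma'$, we have $\mathcal{I}(\sigma)\supseteq\mathcal{I}(\sigma')$.
   Context: Let $E$ be a set of events. A trace is a finite sequence $\sigma=\sigma_0\cdots\sigma_{n-1}$ ($n\ge 0$) or an infinite sequence $\sigma_0\sigma_1\cdots$ of events; $|\sigma|$ is its length ($\infty$ if infinite) and $\mathbb{T}$ is the set of all traces (including the empty trace). Write $\sigma\preceq\sigma'$ iff $|\sigma|\le|\sigma'|$ and $\sigma_i=\sigma'_i$ for all $0\le i<|\sigma|$ (prefix order). For $P\subseteq\mathbb{T}$, $\mathrm{pf}(P)=\{\sigma'\in\mathbb{T}\mid\exists\sigma\in P.\ \sigma'\preceq\sigma\}$. Fix $S^{\max}\subseteq\mathbb{T}$ and let $S^{\mathrm{pf}}=\mathrm{pf}(S^{\max})$ (valid traces). For $P\subseteq\mathbb{T}$, $\alpha(P)=\{\sigma\in\mathrm{pf}(P)\mid\forall\sigma'\in S^{\max}.\ \sigma\preceq\sigma'\Rightarrow\sigma'\in P\}$. Let $L\subseteq\wp(S^{\max})$ with $S^{\max},\emptyset\in L$ be such that $(L,\subseteq)$ is a complete lattice with top $S^{\max}$, bottom $\emptyset$, join $\sqcup$ and meet $\sqcap$ (least upper bounds / greatest lower bounds in $L$ w.r.t. $\subseteq$, not necessarily $\cup,\cap$). The inquiry function is $\mathcal{I}(\sigma)=\sqcap\{P\in L\mid \sigma\in\alpha(P)\}$ for $\sigma\in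 S^{\mathrm{pf}}$, and $\mathcal{I}(\sigma)=\emptyset$ for $\sigma\notin S^{\mathrm{pf}}$. *)

theory Defs
  imports Main "HOL-Library.Extended_Nat"
begin

datatype 'e trace = Fin "'e list" | Inf "nat \<Rightarrow> 'e"

fun tlen :: "'e trace \<Rightarrow> enat" where
  "tlen (Fin xs) = enat (length xs)"
| "tlen (Inf f) = \<infinity>"

fun tnth :: "'e trace \<Rightarrow> nat \<Rightarrow> 'e" where
  "tnth (Fin xs) i = xs ! i"
| "tnth (Inf f) i = f i"

definition tprefix :: "'e trace \<Rightarrow> 'e trace \<Rightarrow> bool" where
  "tprefix s s' \<longleftrightarrow> tlen s \<le> tlen s' \<and> (\<forall>i. enat i < tlen s \<longrightarrow> tnth s i = tnth s' i)"

definition pf :: "'e trace set \<Rightarrow> 'e trace set" where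
  "pf P = {s'. \<exists>s\<in>P. tprefix s' s}"

definition alpha :: "'e trace set \<Rightarrow> 'e trace set \<Rightarrow> 'e trace set" where
  "alpha Smax P = {s \<in> pf P. \<forall>s'\<in>Smax. tprefix s s' \<longrightarrow> s' \<in> P}"

definition is_glb_in :: "'a set set \<Rightarrow> 'a set set \<Rightarrow> 'a set \<Rightarrow> bool" where
  "is_glb_in L Q x \<longleftrightarrow> x \<in> L \<and> (\<forall>q\<in>Q. x \<subseteq> q) \<and> (\<forall>y\<in>L. (\<forall>q\<in>Q. y \<subseteq> q) \<longrightarrow> y \<subseteq> x)"

definition is_lub_in :: "'a set set \<Rightarrow> 'a set set \<Rightarrow> 'a set \<Rightarrow> bool" where
  "is_lub_in L Q x \<longleftrightarrow> x \<in> L \<and> (\<forall>q\<in>Q. q \<subseteq> x) \<and> (\<forall>y\<in>L. (\<forall>q\<in>Q. q \<subseteq> y) \<longrightarrow> x \<subseteq> y)"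

definition meet_in :: "'a set set \<Rightarrow> 'a set set \<Rightarrow> 'a set" where
  "meet_in L Q = (THE x. is_glb_in L Q x)"

definition trace_lattice :: "'e trace set \<Rightarrow> 'e trace set set \<Rightarrow> bool" where
  "trace_lattice Smax L \<longleftrightarrow> L \<subseteq> Pow Smax \<and> Smax \<in> L \<and> {} \<in> L
     \<and> (\<forall>Q\<subseteq>L. \<exists>x. is_glb_in L Q x) \<and> (\<forall>Q\<subseteq>L. \<exists>x. is_lub_in L Q x)"

definition inquiry :: "'e trace set \<Rightarrow> 'e trace set set \<Rightarrow> 'e trace \<Rightarrow> 'e trace set" where
  "inquiry Smax L s = (if s \<in> pf Smax then meet_in L {P \<in> L. s \<in> alpha Smax P} else {})"

end

theory Submission
  imports Defs
begin

lemma tprefix_trans: "tprefix a b \<Longrightarrow> tprefix b c \<Longrightarrow> tprefix a c"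
proof -
  assume a: "tprefix a b" and b: "tprefix b c"
  have "tlen a \<le> tlen c" using a b unfolding tprefix_def by (meson order_trans)
  moreover have "\<forall>i. enat i < tlen a \<longrightarrow> tnth a i = tnth c i"
  proof (intro allI impI)
    fix i assume i: "enat i < tlen a"
    hence "enat i < tlen b" using a unfolding tprefix_def using order_less_le_trans by blast
    thus "tnth a i = tnth c i" using a b i unfolding tprefix_def by simp
  qed
  ultimately show ?thesis unfolding tprefix_def by blast
qed

lemma glb_unique: "is_glb_in L Q x \<Longrightarrow> is_glb_in L Q y \<Longrightarrow> x = y"
proof -
  assume a: "is_glb_in L Q x" and b: "is_glb_in L Q y"
  have "x \<subseteq> y" using a b unfolding is_glb_in_def by (meson)
  moreover have "y \<subseteq> x" using a b unfolding is_glb_in_def by (meson)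
  ultimately show "x = y" by (rule subset_antisym)
qed

lemma meet_is_glb: "\<exists>x. is_glb_in L Q x \<Longrightarrow> is_glb_in L Q (meet_in L Q)"
proof -
  assume "\<exists>x. is_glb_in L Q x"
  then obtain x where x: "is_glb_in L Q x" by blast
  have "(THE x. is_glb_in L Q x) = x" by (rule the_equality[where P="is_glb_in L Q", OF x]) (rule glb_unique[OF _ x])
  thus ?thesis unfolding meet_in_def using x by simp
qed

theorem lemma2:
  fixes Smax :: "'e trace set" and L :: "'e trace set set" and s s' :: "'e trace"
  assumes "trace_lattice Smax L"
    and "tprefix s s'"
  shows "inquiry Smax L s' \<subseteq> inquiry Smax L s"
proof (cases "s' \<in> pf Smax")
  case False
  then show ?thesis by (simp add: inquiry_def)
next
  case True
  then obtain t where t: "t \<in> Smax" "tprefix s' t" unfolding pf_def by blast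
  have sp: "s \<in> pf Smax" using t assms(2) tprefix_trans unfolding pf_def by blast
  let ?Q1 = "{P \<in> L. s \<in> alpha Smax P}"
  let ?Q2 = "{P \<in> L. s' \<in> alpha Smax P}"
  have sub: "?Q1 \<subseteq> ?Q2"
  proof
    fix P assume "P \<in> ?Q1"
    hence PL: "P \<in> L" and a: "\<forall>u\<in>Smax. tprefix s u \<longrightarrow> u \<in> P"
      unfolding alpha_def by auto
    have "t \<in> P" using a t assms(2) tprefix_trans by blast
    hence "s' \<in> pf P" using t unfolding pf_def by blast
    moreover have "\<forall>u\<in>Smax. tprefix s' u \<longrightarrow> u \<in> P"
      using a assms(2) tprefix_trans by blast
    ultimately show "P \<in> ?Q2" using PL unfolding alpha_def by blast
  qed
  have g1: "is_glb_in L ?Q1 (meet_in L ?Q1)"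
    by (rule meet_is_glb) (use assms(1) in \<open>auto simp: trace_lattice_def\<close>)
  have g2: "is_glb_in L ?Q2 (meet_in L ?Q2)"
    by (rule meet_is_glb) (use assms(1) in \<open>auto simp: trace_lattice_def\<close>)
  have m2L: "meet_in L ?Q2 \<in> L" and lb: "\<forall>q\<in>?Q2. meet_in L ?Q2 \<subseteq> q"
    using g2 unfolding is_glb_in_def by auto
  have lb1: "\<forall>q\<in>?Q1. meet_in L ?Q2 \<subseteq> q" using lb sub by blast
  have gr: "\<forall>y\<in>L. (\<forall>q\<in>?Q1. y \<subseteq> q) \<longrightarrow> y \<subseteq> meet_in L ?Q1"
    using g1 unfolding is_glb_in_def by blast
  have "meet_in L ?Q2 \<subseteq> meet_in L ?Q1"
    using gr m2L lb1 by blast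
  moreover have "inquiry Smax L s' = meet_in L ?Q2" using True unfolding inquiry_def by (rule if_P)
  moreover have "inquiry Smax L s = meet_in L ?Q1" using sp unfolding inquiry_def by (rule if_P)
  ultimately show ?thesis by (simp only:)
qed

end
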